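(* Let $r\ge2$, $m>1$ and $1\le t\le 2^m-1$ be integers, and let $\mathcal C$ be a binary linear code with coordinates indexed by $\Omega_t^{(m)}$ such that every row of $H_t^{(m)}$ lies in the dual code $\mathcal C^\perp$. Let $m_0\in[m]$ satisfy $2^{m_0-1}-1<t\le2^{m_0}-1$, and set $t_1=2^{m_0-1}-1$, $t_2=t-t_1-1$, $A=\Omega_{t_1}^{(m)}$, $B=\Omega_t^{(m)}\setminus A$, and for $j\in\mathbb Z_r$, $A_j=\{(i_m,\dots,i_1)\in A: i_{m_0}=j\}$. For $j\in\mathbb Z_{r+1}$ let $\psi_j:\mathbb Z_{r+1}^{m-1}\to\mathbb Z_{r+1}^m$ insert $j$ as the new $m_0$-th coordinate from the right, i.e. $\psi_j(i_{m-1},\dots,i_{m_0},i_{m_0-1},\dots,i_1)=(i_{m-1},\dots,i_{m_0},j,i_{m_0-1},\dots,i_1)$. Then: 1) for each $j\in\mathbb Z_r$, $\psi_j$ restricts to a bijection $\Omega_{t_1}^{(m-1)}\to A_j$, and for every codeword $x\in\mathcal C$ and every $\alpha\in\Omega_{t_1}^{(m-1)}\setminus\Omega_0^{(m-1)}$, $x_{\psi_j(\alpha)}=\sum_{\beta\in\mathcal L^{(m-1)}(\alpha)}x_{\psi_j(\beta)}$ (i.e. the punctured code $\mathcal C|_{A_j}$, re-indexed via $\psi_j$, has a parity-check matrix containing all rows of $H_{t_1}^{(m-1)}$); 2) if $t_2\ge1$, $\psi_r$ restricts to a bijection $\Omega_{t_2}^{(m-1)}\to B$, and for every $x\in\mathcal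 C$ and every $\alpha\in\Omega_{t_2}^{(m-1)}\setminus\Omega_0^{(m-1)}$, $x_{\psi_r(\alpha)}=\sum_{\beta\in\mathcal L^{(m-1)}(\alpha)}x_{\psi_r(\beta)}$ (i.e. $\mathcal C|_B$, re-indexed via $\psi_r$, has a parity-check matrix containing all rows of $H_{t_2}^{(m-1)}$).
   Context: For any $m'\ge1$: $\mathbb Z_r=\{0,\dots,r-1\}\subseteq\mathbb Z_{r+1}=\{0,\dots,r\}$ as sets; elements of $\mathbb Z_{r+1}^{m'}$ are written $\alpha=(i_{m'},\dots,i_1)$, $i_\ell$ being the $\ell$-th coordinate from the right. $\mathbf U^{(m')}(\alpha)=\{\ell: i_\ell=r\}$, $\mathbf T^{(m')}(\alpha)=\{\ell: i_\ell\in\mathbb Z_r\}$, $\mathcal L^{(m')}(\alpha)=\{(j_{m'},\dots,j_1)\in\mathbb Z_r^{m'}: j_\ell=i_\ell\ \forall\ell\in\mathbf T^{(m')}(\alpha)\}$. For $0\le s\le2^{m'}-1$ with binary expansion $s=\sum_\ell\lambda_\ell2^{\ell-1}$, $\mathrm{supp}_{m'}(s)=\{\ell:\lambda_\ell=1\}$; $\Gamma_s^{(m')}=\{\alpha\in\mathbb Z_{r+1}^{m'}:\mathbf U^{(m')}(\alpha)=\mathrm{supp}_{m'}(s)\}$ and $\Omega_s^{(m')}=\bigcup_{\ell=0}^s\Gamma_\ell^{(m')}$. $H_t^{(m')}$ is the binary matrix with rows indexed by $\Omega_t^{(m')}\setminus\Omega_0^{(m')}$, columns by $\Omega_t^{(m')}$,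 entry $(\alpha,\beta)$ equal to $1$ iff $\beta\in\mathcal L^{(m')}(\alpha)\cup\{\alpha\}$. Equivalently, all rows of $H_t^{(m')}$ lie in $\mathcal C^\perp$ iff $x_\alpha=\sum_{\beta\in\mathcal L^{(m')}(\alpha)}x_\beta$ for all $x\in\mathcal C$ and all $\alpha\in\Omega_t^{(m')}\setminus\Omega_0^{(m')}$. *)

theory Defs
  imports Main "HOL-Library.Z2"
begin

text \<open>An element of Z_{r+1}^m is a function nat => nat; coordinate l (1 <= l <= m) is
  the l-th coordinate from the right; outside {1..m} the function is 0.\<close>

definition vecs :: "nat \<Rightarrow> nat \<Rightarrow> (nat \<Rightarrow> nat) set" where
  "vecs q m = {\<alpha>. (\<forall>l\<in>{1..m}. \<alpha> l < q) \<and> (\<forall>l. l \<notin> {1..m} \<longrightarrow> \<alpha> l = 0)}"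

definition Uset :: "nat \<Rightarrow> nat \<Rightarrow> (nat \<Rightarrow> nat) \<Rightarrow> nat set" where
  "Uset r m \<alpha> = {l\<in>{1..m}. \<alpha> l = r}"

definition Tset :: "nat \<Rightarrow> nat \<Rightarrow> (nat \<Rightarrow> nat) \<Rightarrow> nat set" where
  "Tset r m \<alpha> = {l\<in>{1..m}. \<alpha> l < r}"

definition Lset :: "nat \<Rightarrow> nat \<Rightarrow> (nat \<Rightarrow> nat) \<Rightarrow> (nat \<Rightarrow> nat) set" where
  "Lset r m \<alpha> = {\<beta>\<in>vecs r m. \<forall>l\<in>Tset r m \<alpha>. \<beta> l = \<alpha> l}"

definition suppb :: "nat \<Rightarrow> nat \<Rightarrow> nat set" where
  "suppb m s = {l\<in>{1..m}. odd (s div 2 ^ (l - 1))}"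

definition Gamma :: "nat \<Rightarrow> nat \<Rightarrow> nat \<Rightarrow> (nat \<Rightarrow> nat) set" where
  "Gamma r m s = {\<alpha>\<in>vecs (Suc r) m. Uset r m \<alpha> = suppb m s}"

definition Omega :: "nat \<Rightarrow> nat \<Rightarrow> nat \<Rightarrow> (nat \<Rightarrow> nat) set" where
  "Omega r m s = (\<Union>l\<in>{0..s}. Gamma r m l)"

definition Hrow :: "nat \<Rightarrow> nat \<Rightarrow> nat \<Rightarrow> (nat \<Rightarrow> nat) \<Rightarrow> (nat \<Rightarrow> nat) \<Rightarrow> bit" where
  "Hrow r m t \<alpha> = (\<lambda>\<beta>. if \<beta> \<in> Omega r m t \<and> \<beta> \<in> Lset r m \<alpha> \<union> {\<alpha>} then 1 else 0)"

definition words :: "'i set \<Rightarrow> ('i \<Rightarrow> bit) set" where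
  "words I = {x. \<forall>i. i \<notin> I \<longrightarrow> x i = 0}"

definition binary_linear_code :: "'i set \<Rightarrow> ('i \<Rightarrow> bit) set \<Rightarrow> bool" where
  "binary_linear_code I C \<longleftrightarrow> C \<subseteq> words I \<and> (\<lambda>i. 0) \<in> C \<and> (\<forall>x\<in>C. \<forall>y\<in>C. (\<lambda>i. x i + y i) \<in> C)"

definition dual_code :: "'i set \<Rightarrow> ('i \<Rightarrow> bit) set \<Rightarrow> ('i \<Rightarrow> bit) set" where
  "dual_code I C = {y\<in>words I. \<forall>x\<in>C. (\<Sum>i\<in>I. x i * y i) = 0}"

definition psi :: "nat \<Rightarrow> nat \<Rightarrow> (nat \<Rightarrow> nat) \<Rightarrow> (nat \<Rightarrow> nat)" where
  "psi m0 j \<alpha> = (\<lambda>l. if l < m0 then \<alpha> l else if l = m0 then j else \<alpha> (l - 1))"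

end

theory Submission
  imports Defs
begin


definition wt :: "nat set \<Rightarrow> nat" where "wt U = (\<Sum>i\<in>U. 2 ^ (i - 1))"

lemma suppb_Suc: "suppb (Suc m) l = suppb m l \<union> (if odd (l div 2 ^ m) then {Suc m} else {})"
  unfolding suppb_def by (auto simp: le_Suc_eq)

lemma wt_suppb: "wt (suppb m l) = l mod 2 ^ m"
proof (induction m)
  case 0 then show ?case by (simp add: wt_def suppb_def)
next
  case (Suc m)
  have fin: "finite (suppb m l)" by (simp add: suppb_def)
  have nin: "Suc m \<notin> suppb m l" by (simp add: suppb_def)
  have "l mod 2 ^ Suc m = 2 ^ m * (l div 2 ^ m mod 2) + l mod 2 ^ m"
    by (metis mod_mult2_eq power_Suc2)
  then show ?case using Suc fin nin
    by (auto simp: suppb_Suc wt_def odd_iff_mod_2_eq_one even_iff_mod_2_eq_zero)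
qed

lemma wt_le_sub: "U \<subseteq> {1..k} \<Longrightarrow> wt U < 2 ^ k"
proof (induction k arbitrary: U)
  case 0 then show ?case by (simp add: wt_def)
next
  case (Suc k)
  have "U - {Suc k} \<subseteq> {1..k}" using Suc.prems by auto
  then have IH: "wt (U - {Suc k}) < 2 ^ k" by (rule Suc.IH)
  have fin: "finite U" using Suc.prems finite_subset by blast
  have "wt U \<le> wt (U - {Suc k}) + 2 ^ k"
  proof (cases "Suc k \<in> U")
    case True then show ?thesis using fin by (simp add: wt_def sum.remove)
  next
    case False then show ?thesis by simp
  qed
  then show ?case using IH by simp
qed

lemma bit_suppb: "suppb m l = {i\<in>{1..m}. bit l (i - 1)}"
  by (simp add: suppb_def bit_iff_odd)

lemma bit_wt: "U \<subseteq> {1..m} \<Longrightarrow> bit (wt U) k \<longleftrightarrow> Suc k \<in> U"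
proof (induction m arbitrary: U k)
  case 0 then show ?case by (simp add: wt_def)
next
  case (Suc m)
  let ?U = "U - {Suc m}"
  have sub: "?U \<subseteq> {1..m}" using Suc.prems by auto
  have lt: "wt ?U < 2 ^ m" using sub by (rule wt_le_sub)
  have fin: "finite U" using Suc.prems finite_subset by blast
  show ?case
  proof (cases "Suc m \<in> U")
    case False
    then have "?U = U" by simp
    then show ?thesis using Suc.IH sub by metis
  next
    case True
    have eq: "wt U = wt ?U + 2 ^ m" using fin True by (simp add: wt_def sum.remove)
    have dis: "wt ?U + 2 ^ m = Bit_Operations.or (wt ?U) (2 ^ m)"
    proof (rule disjunctive_add)
      fix n
      have "take_bit m (wt ?U) = wt ?U" using lt by (simp add: take_bit_nat_eq_self_iff)
      then have "\<not> bit (wt ?U) m" by (metis bit_take_bit_iff less_irrefl)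
      then show "\<not> bit (wt ?U) n \<or> \<not> bit (2 ^ m :: nat) n" by (auto simp: bit_exp_iff)
    qed
    have "bit (wt U) k \<longleftrightarrow> bit (wt ?U) k \<or> k = m"
      unfolding eq dis by (simp add: bit_or_iff bit_exp_iff)
    also have "\<dots> \<longleftrightarrow> Suc k \<in> U" using Suc.IH[OF sub, of k] True by auto
    finally show ?thesis .
  qed
qed

lemma suppb_wt: "U \<subseteq> {1..m} \<Longrightarrow> suppb m (wt U) = U"
  unfolding bit_suppb using bit_wt[of U m] by auto



lemma Uset_sub: "Uset r m \<alpha> \<subseteq> {1..m}" by (auto simp: Uset_def)

lemma Omega_char: "\<alpha> \<in> Omega r m s \<longleftrightarrow> \<alpha> \<in> vecs (Suc r) m \<and> wt (Uset r m \<alpha>) \<le> s"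
proof
  assume "\<alpha> \<in> Omega r m s"
  then obtain l where l: "l \<le> s" "\<alpha> \<in> vecs (Suc r) m" "Uset r m \<alpha> = suppb m l"
    by (auto simp: Omega_def Gamma_def)
  then show "\<alpha> \<in> vecs (Suc r) m \<and> wt (Uset r m \<alpha>) \<le> s"
    using wt_suppb[of m l] by (metis dual_order.trans mod_less_eq_dividend)
next
  assume a: "\<alpha> \<in> vecs (Suc r) m \<and> wt (Uset r m \<alpha>) \<le> s"
  have "Uset r m \<alpha> = suppb m (wt (Uset r m \<alpha>))" using suppb_wt[OF Uset_sub] by simp
  then show "\<alpha> \<in> Omega r m s" using a unfolding Omega_def Gamma_def by auto
qed

lemma wt_ge: "finite U \<Longrightarrow> i \<in> U \<Longrightarrow> 2 ^ (i - 1) \<le> wt U"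
  unfolding wt_def by (metis member_le_sum zero_le)

lemma wt_zero: "finite U \<Longrightarrow> wt U = 0 \<longleftrightarrow> U = {}"
  unfolding wt_def by simp

lemma wt_small: "U \<subseteq> {1..m} \<Longrightarrow> wt U < 2 ^ k \<Longrightarrow> U \<subseteq> {1..k}"
proof
  fix i assume "U \<subseteq> {1..m}" "wt U < 2 ^ k" "i \<in> U"
  moreover have "finite U" using \<open>U \<subseteq> {1..m}\<close> finite_subset by blast
  ultimately have "2 ^ (i - 1) < (2::nat) ^ k" using wt_ge by (metis le_less_trans)
  then show "i \<in> {1..k}" using \<open>i \<in> U\<close> \<open>U \<subseteq> {1..m}\<close> by auto
qed

lemma wt_insert: "finite U \<Longrightarrow> i \<notin> U \<Longrightarrow> wt (insert i U) = wt U + 2 ^ (i - 1)"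
  unfolding wt_def by simp

lemma vecs_finite: "finite (vecs q m)"
proof -
  have "vecs q m = {f. \<forall>x. (x \<in> {1..m} \<longrightarrow> f x \<in> {..<q}) \<and> (x \<notin> {1..m} \<longrightarrow> f x = 0)}"
    by (auto simp: vecs_def)
  then show ?thesis using finite_set_of_finite_funs[of "{1..m}" "{..<q}" 0] by simp
qed

definition unpsi :: "nat \<Rightarrow> (nat \<Rightarrow> nat) \<Rightarrow> (nat \<Rightarrow> nat)" where
  "unpsi m0 \<gamma> = (\<lambda>l. if l < m0 then \<gamma> l else \<gamma> (Suc l))"

lemma psi_vecs: "1 \<le> m0 \<Longrightarrow> m0 \<le> Suc n \<Longrightarrow> \<alpha> \<in> vecs q n \<Longrightarrow> j < q \<Longrightarrow> psi m0 j \<alpha> \<in> vecs q (Suc n)"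
proof -
  assume a: "1 \<le> m0" "m0 \<le> Suc n" "\<alpha> \<in> vecs q n" "j < q"
  have z: "\<alpha> l = 0" if "l \<notin> {1..n}" for l using a(3) that by (simp add: vecs_def)
  have b: "\<alpha> l < q" if "l \<in> {1..n}" for l using a(3) that by (simp add: vecs_def)
  have "psi m0 j \<alpha> l < q" if "l \<in> {1..Suc n}" for l
  proof -
    consider "l < m0" | "l = m0" | "l > m0" by linarith
    then show ?thesis
    proof cases
      case 1 then show ?thesis using that a(2) b by (auto simp: psi_def)
    next
      case 2 then show ?thesis using a(4) by (auto simp: psi_def)
    next
      case 3
      then have "l - 1 \<in> {1..n}" using that a(1) by auto
      then show ?thesis using 3 b[of "l - 1"] by (auto simp: psi_def)
    qed
  qed
  moreover have "psi m0 j \<alpha> l = 0" if lo: "l \<notin> {1..Suc n}" for l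
  proof -
    consider "l = 0" | "l > Suc n" using lo by force
    then show ?thesis
    proof cases
      case 1 then show ?thesis using a(1) z[of 0] by (auto simp: psi_def)
    next
      case 2
      then have "l - 1 \<notin> {1..n}" by auto
      then show ?thesis using 2 a(2) z[of "l - 1"] by (auto simp: psi_def)
    qed
  qed
  ultimately show ?thesis unfolding vecs_def by blast
qed

lemma psi_inj: "1 \<le> m0 \<Longrightarrow> inj (psi m0 j)"
proof (rule injI)
  fix a b assume m0: "1 \<le> m0" and e: "psi m0 j a = psi m0 j b"
  show "a = b"
  proof
    fix l
    show "a l = b l"
    proof (cases "l < m0")
      case True then show ?thesis using fun_cong[OF e, of l] by (simp add: psi_def)
    next
      case False then show ?thesis using fun_cong[OF e, of "Suc l"] by (simp add: psi_def)
    qed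
  qed
qed

lemma psi_unpsi: "\<gamma> m0 = j \<Longrightarrow> psi m0 j (unpsi m0 \<gamma>) = \<gamma>"
  unfolding psi_def unpsi_def by (auto simp: fun_eq_iff)

lemma unpsi_vecs: "1 \<le> m0 \<Longrightarrow> m0 \<le> Suc n \<Longrightarrow> \<gamma> \<in> vecs q (Suc n) \<Longrightarrow> unpsi m0 \<gamma> \<in> vecs q n"
  unfolding vecs_def unpsi_def by auto

lemma Uset_psi: "1 \<le> m0 \<Longrightarrow> m0 \<le> Suc n \<Longrightarrow> Uset r n \<alpha> \<subseteq> {1..<m0} \<Longrightarrow> \<alpha> \<in> vecs (Suc r) n \<Longrightarrow>
   Uset r (Suc n) (psi m0 j \<alpha>) = Uset r n \<alpha> \<union> (if j = r then {m0} else {})"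
proof -
  assume a: "1 \<le> m0" "m0 \<le> Suc n" "Uset r n \<alpha> \<subseteq> {1..<m0}" "\<alpha> \<in> vecs (Suc r) n"
  have z: "\<alpha> l = 0" if "l \<notin> {1..n}" for l using a(4) that by (simp add: vecs_def)
  show ?thesis
  proof (rule set_eqI)
    fix x
    show "x \<in> Uset r (Suc n) (psi m0 j \<alpha>) \<longleftrightarrow> x \<in> Uset r n \<alpha> \<union> (if j = r then {m0} else {})"
    proof (cases "x < m0")
      case True then show ?thesis using a by (auto simp: Uset_def psi_def)
    next
      case False
      show ?thesis
      proof (cases "x = m0")
        case True then show ?thesis using a by (auto simp: Uset_def psi_def)
      next
        case ne: False
        have "x \<notin> Uset r n \<alpha>" using a(3) False by auto
        moreover have "x \<notin> Uset r (Suc n) (psi m0 j \<alpha>)"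
        proof
          assume "x \<in> Uset r (Suc n) (psi m0 j \<alpha>)"
          then have x: "x \<le> Suc n" "\<alpha> (x - 1) = r" using False ne by (auto simp: Uset_def psi_def)
          have "x - 1 \<in> {1..n}"
          proof (rule ccontr)
            assume "x - 1 \<notin> {1..n}"
            then have "\<alpha> (x - 1) = 0" by (rule z)
            then have "r = 0" using x by simp
            then show False using a(4) \<open>x - 1 \<notin> {1..n}\<close> x False ne a(1) by auto
          qed
          then have "x - 1 \<in> Uset r n \<alpha>" using x by (simp add: Uset_def)
          then have "x - 1 < m0" using a(3) by auto
          then show False using False ne by simp
        qed
        ultimately show ?thesis using ne by auto
      qed
    qed
  qed
qed

lemma Uset_unpsi_sub: "0 < r \<Longrightarrow> 1 \<le> m0 \<Longrightarrow> \<alpha> \<in> vecs (Suc r) n \<Longrightarrow>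
   Uset r (Suc n) (psi m0 j \<alpha>) \<subseteq> {1..m0} \<Longrightarrow> Uset r n \<alpha> \<subseteq> {1..<m0}"
proof
  fix l assume a: "0 < r" "1 \<le> m0" "\<alpha> \<in> vecs (Suc r) n" "Uset r (Suc n) (psi m0 j \<alpha>) \<subseteq> {1..m0}"
    "l \<in> Uset r n \<alpha>"
  show "l \<in> {1..<m0}"
  proof (rule ccontr)
    assume "l \<notin> {1..<m0}"
    then have "m0 \<le> l" using a(5) by (auto simp: Uset_def)
    then have "Suc l \<in> Uset r (Suc n) (psi m0 j \<alpha>)" using a(5) by (auto simp: Uset_def psi_def)
    then show False using a(4) \<open>m0 \<le> l\<close> by auto
  qed
qed



lemma Lmem:
  assumes m0: "1 \<le> m0" "m0 \<le> Suc n" and k: "k < r" and b: "\<beta> \<in> vecs r n"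
  shows "psi m0 k \<beta> \<in> Lset r (Suc n) (psi m0 j \<alpha>) \<longleftrightarrow> (j < r \<longrightarrow> k = j) \<and> \<beta> \<in> Lset r n \<alpha>"
proof -
  have pv: "psi m0 k \<beta> \<in> vecs r (Suc n)" using psi_vecs[OF m0 b k] .
  let ?P = "\<forall>l\<in>{1..Suc n}. psi m0 j \<alpha> l < r \<longrightarrow> psi m0 k \<beta> l = psi m0 j \<alpha> l"
  let ?Q = "\<forall>l\<in>{1..n}. \<alpha> l < r \<longrightarrow> \<beta> l = \<alpha> l"
  have "?P \<longleftrightarrow> (j < r \<longrightarrow> k = j) \<and> ?Q"
  proof
    assume P: ?P
    have "j < r \<longrightarrow> k = j" using P[rule_format, of m0] m0 by (simp add: psi_def)
    moreover have ?Q
    proof (intro ballI impI)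
      fix l assume l: "l \<in> {1..n}" "\<alpha> l < r"
      show "\<beta> l = \<alpha> l"
      proof (cases "l < m0")
        case True then show ?thesis using P[rule_format, of l] l by (simp add: psi_def)
      next
        case False then show ?thesis using P[rule_format, of "Suc l"] l by (simp add: psi_def)
      qed
    qed
    ultimately show "(j < r \<longrightarrow> k = j) \<and> ?Q" by blast
  next
    assume Q: "(j < r \<longrightarrow> k = j) \<and> ?Q"
    show ?P
    proof (intro ballI impI)
      fix l assume l: "l \<in> {1..Suc n}" "psi m0 j \<alpha> l < r"
      consider "l < m0" | "l = m0" | "l > m0" by linarith
      then show "psi m0 k \<beta> l = psi m0 j \<alpha> l"
      proof cases
        case 1 then show ?thesis using Q l m0 by (auto simp: psi_def)
      next
        case 2 then show ?thesis using Q l by (auto simp: psi_def)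
      next
        case 3
        then have "l - 1 \<in> {1..n}" using l m0 by auto
        then show ?thesis using 3 Q l by (auto simp: psi_def)
      qed
    qed
  qed
  then show ?thesis using pv b unfolding Lset_def Tset_def by auto
qed

lemma vecs_decomp:
  assumes m0: "1 \<le> m0" "m0 \<le> Suc n" and b: "\<beta> \<in> vecs r (Suc n)"
  shows "\<beta> m0 < r" "unpsi m0 \<beta> \<in> vecs r n" "\<beta> = psi m0 (\<beta> m0) (unpsi m0 \<beta>)"
  using b m0 unpsi_vecs[OF m0 b] psi_unpsi[of \<beta> m0] by (auto simp: vecs_def)

lemma Lset_vecs: "Lset r n \<alpha> \<subseteq> vecs r n" by (auto simp: Lset_def)

lemma Lset_psi_lt:
  assumes m0: "1 \<le> m0" "m0 \<le> Suc n" and j: "j < r"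
  shows "Lset r (Suc n) (psi m0 j \<alpha>) = psi m0 j ` Lset r n \<alpha>"
proof (rule set_eqI)
  fix \<gamma>
  show "\<gamma> \<in> Lset r (Suc n) (psi m0 j \<alpha>) \<longleftrightarrow> \<gamma> \<in> psi m0 j ` Lset r n \<alpha>"
  proof
    assume g: "\<gamma> \<in> Lset r (Suc n) (psi m0 j \<alpha>)"
    then have gv: "\<gamma> \<in> vecs r (Suc n)" by (auto simp: Lset_def)
    note d = vecs_decomp[OF m0 gv]
    have "psi m0 (\<gamma> m0) (unpsi m0 \<gamma>) \<in> Lset r (Suc n) (psi m0 j \<alpha>)" using g d(3) by simp
    then have "\<gamma> m0 = j \<and> unpsi m0 \<gamma> \<in> Lset r n \<alpha>" using Lmem[OF m0 d(1) d(2)] j by blast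
    then show "\<gamma> \<in> psi m0 j ` Lset r n \<alpha>" using d(3) by (metis image_eqI)
  next
    assume "\<gamma> \<in> psi m0 j ` Lset r n \<alpha>"
    then obtain \<beta> where "\<beta> \<in> Lset r n \<alpha>" "\<gamma> = psi m0 j \<beta>" by blast
    then show "\<gamma> \<in> Lset r (Suc n) (psi m0 j \<alpha>)" using Lmem[OF m0 j] Lset_vecs by blast
  qed
qed

lemma Lset_psi_r:
  assumes m0: "1 \<le> m0" "m0 \<le> Suc n"
  shows "Lset r (Suc n) (psi m0 r \<alpha>) = (\<lambda>(j,\<beta>). psi m0 j \<beta>) ` ({..<r} \<times> Lset r n \<alpha>)"
proof (rule set_eqI)
  fix \<gamma>
  show "\<gamma> \<in> Lset r (Suc n) (psi m0 r \<alpha>) \<longleftrightarrow> \<gamma> \<in> (\<lambda>(j,\<beta>). psi m0 j \<beta>) ` ({..<r} \<times> Lset r n \<alpha>)"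
  proof
    assume g: "\<gamma> \<in> Lset r (Suc n) (psi m0 r \<alpha>)"
    then have gv: "\<gamma> \<in> vecs r (Suc n)" by (auto simp: Lset_def)
    note d = vecs_decomp[OF m0 gv]
    have "psi m0 (\<gamma> m0) (unpsi m0 \<gamma>) \<in> Lset r (Suc n) (psi m0 r \<alpha>)" using g d(3) by simp
    then have "unpsi m0 \<gamma> \<in> Lset r n \<alpha>" using Lmem[OF m0 d(1) d(2)] by blast
    then have "(\<gamma> m0, unpsi m0 \<gamma>) \<in> {..<r} \<times> Lset r n \<alpha>" using d(1) by simp
    then show "\<gamma> \<in> (\<lambda>(j,\<beta>). psi m0 j \<beta>) ` ({..<r} \<times> Lset r n \<alpha>)" using d(3)
      by (metis (no_types, lifting) case_prod_conv image_eqI)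
  next
    assume "\<gamma> \<in> (\<lambda>(j,\<beta>). psi m0 j \<beta>) ` ({..<r} \<times> Lset r n \<alpha>)"
    then obtain j \<beta> where "j < r" "\<beta> \<in> Lset r n \<alpha>" "\<gamma> = psi m0 j \<beta>" by auto
    then show "\<gamma> \<in> Lset r (Suc n) (psi m0 r \<alpha>)" using Lmem[OF m0 \<open>j < r\<close>] Lset_vecs by blast
  qed
qed

lemma Lset_self: "\<beta> \<in> vecs r n \<Longrightarrow> Lset r n \<beta> = {\<beta>}"
proof
  assume b: "\<beta> \<in> vecs r n"
  show "Lset r n \<beta> \<subseteq> {\<beta>}"
  proof
    fix \<gamma> assume g: "\<gamma> \<in> Lset r n \<beta>"
    have "\<gamma> l = \<beta> l" for l
    proof (cases "l \<in> {1..n}")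
      case True then show ?thesis using g b unfolding Lset_def Tset_def vecs_def by blast
    next
      case False then show ?thesis using g b unfolding Lset_def vecs_def by auto
    qed
    then show "\<gamma> \<in> {\<beta>}" by auto
  qed
  show "{\<beta>} \<subseteq> Lset r n \<beta>" using b by (auto simp: Lset_def)
qed

lemma bit_eq_of_sum: "(a::bit) + b = 0 \<Longrightarrow> a = b"
  by (cases a; cases b) auto


lemma Omega_vecs: "Omega r m s \<subseteq> vecs (Suc r) m" by (auto simp: Omega_char)
lemma Uset_finite: "finite (Uset r m \<alpha>)" by (simp add: Uset_def)
lemma Omega_finite: "finite (Omega r m s)"
  by (rule finite_subset[OF Omega_vecs vecs_finite])
lemma Omega0_iff: "\<alpha> \<in> Omega r m 0 \<longleftrightarrow> \<alpha> \<in> vecs (Suc r) m \<and> Uset r m \<alpha> = {}"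
  by (simp add: Omega_char wt_zero[OF Uset_finite])
lemma OmegaK: "\<alpha> \<in> Omega r N (2 ^ K - 1) \<longleftrightarrow> \<alpha> \<in> vecs (Suc r) N \<and> Uset r N \<alpha> \<subseteq> {1..K}"
proof -
  have "wt (Uset r N \<alpha>) \<le> 2 ^ K - 1 \<longleftrightarrow> Uset r N \<alpha> \<subseteq> {1..K}"
  proof
    assume "wt (Uset r N \<alpha>) \<le> 2 ^ K - 1"
    then have "wt (Uset r N \<alpha>) < 2 ^ K"
    proof -
      have p: "(0::nat) < 2 ^ K" by simp
      show ?thesis using p \<open>wt (Uset r N \<alpha>) \<le> 2 ^ K - 1\<close> by linarith
    qed
    then show "Uset r N \<alpha> \<subseteq> {1..K}" using wt_small[OF Uset_sub] by blast
  next
    assume "Uset r N \<alpha> \<subseteq> {1..K}"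
    then have "wt (Uset r N \<alpha>) < 2 ^ K" by (rule wt_le_sub)
    then show "wt (Uset r N \<alpha>) \<le> 2 ^ K - 1" by simp
  qed
  then show ?thesis by (simp add: Omega_char)
qed

lemma vecs_mono: "vecs r m \<subseteq> vecs (Suc r) m" by (auto simp: vecs_def less_Suc_eq)

lemma vecs_Uset: "\<beta> \<in> vecs r m \<Longrightarrow> Uset r m \<beta> = {}"
  by (auto simp: vecs_def Uset_def)

lemma parity:
  assumes C: "binary_linear_code (Omega r m t) C"
    and H: "\<forall>\<alpha>\<in>Omega r m t - Omega r m 0. Hrow r m t \<alpha> \<in> dual_code (Omega r m t) C"
    and g: "\<gamma> \<in> Omega r m t - Omega r m 0" and x: "x \<in> C"
  shows "x \<gamma> = (\<Sum>\<beta>\<in>Lset r m \<gamma>. x \<beta>)"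
proof -
  let ?O = "Omega r m t" and ?L = "Lset r m \<gamma>"
  have "(\<Sum>i\<in>?O. x i * Hrow r m t \<gamma> i) = 0" using H g x by (auto simp: dual_code_def)
  have LO: "?L \<subseteq> ?O"
  proof
    fix \<beta> assume "\<beta> \<in> ?L"
    then have b: "\<beta> \<in> vecs r m" by (auto simp: Lset_def)
    then show "\<beta> \<in> ?O" using vecs_mono vecs_Uset[OF b] Omega_char[of \<beta> r m t] by (auto simp: wt_def)
  qed
  have gO: "\<gamma> \<in> ?O" "\<gamma> \<notin> Omega r m 0" using g by auto
  have gnL: "\<gamma> \<notin> ?L"
  proof
    assume "\<gamma> \<in> ?L"
    then have "\<gamma> \<in> vecs r m" by (auto simp: Lset_def)
    then have "Uset r m \<gamma> = {}" by (rule vecs_Uset)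
    then show False using gO Omega0_iff Omega_vecs by blast
  qed
  have finL: "finite ?L" using LO Omega_finite finite_subset by blast
  have "(\<Sum>i\<in>?O. x i * Hrow r m t \<gamma> i) = (\<Sum>i\<in>?O. if i \<in> insert \<gamma> ?L then x i else 0)"
    by (rule sum.cong) (auto simp: Hrow_def)
  also have "\<dots> = (\<Sum>i\<in>?O \<inter> insert \<gamma> ?L. x i)"
    by (simp add: sum.inter_restrict[OF Omega_finite])
  also have "?O \<inter> insert \<gamma> ?L = insert \<gamma> ?L" using LO gO by auto
  also have "(\<Sum>i\<in>insert \<gamma> ?L. x i) = x \<gamma> + (\<Sum>i\<in>?L. x i)" using finL gnL by simp
  finally show ?thesis using \<open>(\<Sum>i\<in>?O. x i * Hrow r m t \<gamma> i) = 0\<close> bit_eq_of_sum by metis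
qed

lemma pair_sum:
  assumes m0: "1 \<le> m0" and L: "finite L"
  shows "(\<Sum>\<gamma>\<in>(\<lambda>(j,\<beta>). psi m0 j \<beta>) ` ({..<r} \<times> L). x \<gamma>) = (\<Sum>j<r. \<Sum>\<beta>\<in>L. x (psi m0 j \<beta>))"
proof -
  have inj: "inj_on (\<lambda>(j,\<beta>). psi m0 j \<beta>) ({..<r} \<times> L)"
  proof (rule inj_onI, clarify)
    fix j \<beta> j' \<beta>' assume e: "psi m0 j \<beta> = psi m0 j' \<beta>'"
    have "psi m0 j \<beta> m0 = psi m0 j' \<beta>' m0" using e by simp
    then have "j = j'" by (simp add: psi_def)
    then show "j = j' \<and> \<beta> = \<beta>'" using e psi_inj[OF m0] by (auto dest: injD)
  qed
  have "(\<Sum>\<gamma>\<in>(\<lambda>(j,\<beta>). psi m0 j \<beta>) ` ({..<r} \<times> L). x \<gamma>) = (\<Sum>p\<in>{..<r} \<times> L. x (case p of (j, \<beta>) \<Rightarrow> psi m0 j \<beta>))"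
    using sum.reindex[OF inj] by (simp add: comp_def)
  also have "\<dots> = (\<Sum>j<r. \<Sum>\<beta>\<in>L. x (psi m0 j \<beta>))"
    using sum.cartesian_product[of "\<lambda>j \<beta>. x (psi m0 j \<beta>)" L "{..<r}"] by (simp add: split_def)
  finally show ?thesis .
qed



lemma part1:
  assumes r: "2 \<le> r" and K: "Suc K \<le> Suc n" and tK: "2 ^ K \<le> t"
    and C: "binary_linear_code (Omega r (Suc n) t) C"
    and H: "\<forall>\<alpha>\<in>Omega r (Suc n) t - Omega r (Suc n) 0. Hrow r (Suc n) t \<alpha> \<in> dual_code (Omega r (Suc n) t) C"
    and j: "j < r"
  shows "bij_betw (psi (Suc K) j) (Omega r n (2 ^ K - 1)) {\<alpha>\<in>Omega r (Suc n) (2 ^ K - 1). \<alpha> (Suc K) = j} \<and>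
         (\<forall>x\<in>C. \<forall>\<alpha>\<in>Omega r n (2 ^ K - 1) - Omega r n 0.
               x (psi (Suc K) j \<alpha>) = (\<Sum>\<beta>\<in>Lset r n \<alpha>. x (psi (Suc K) j \<beta>)))"
proof -
  let ?m0 = "Suc K"
  have m0: "1 \<le> ?m0" "?m0 \<le> Suc n" using K by auto
  have jr: "j \<noteq> r" "j < Suc r" using j by auto
  have sub: "{1..K} = {1..<?m0}" by auto
  have img: "psi ?m0 j ` Omega r n (2 ^ K - 1) = {\<alpha>\<in>Omega r (Suc n) (2 ^ K - 1). \<alpha> ?m0 = j}"
  proof
    show "psi ?m0 j ` Omega r n (2 ^ K - 1) \<subseteq> {\<alpha>\<in>Omega r (Suc n) (2 ^ K - 1). \<alpha> ?m0 = j}"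
    proof
      fix \<gamma> assume "\<gamma> \<in> psi ?m0 j ` Omega r n (2 ^ K - 1)"
      then obtain \<alpha> where a: "\<alpha> \<in> Omega r n (2 ^ K - 1)" "\<gamma> = psi ?m0 j \<alpha>" by blast
      then have av: "\<alpha> \<in> vecs (Suc r) n" "Uset r n \<alpha> \<subseteq> {1..<?m0}" using OmegaK sub by auto
      have "psi ?m0 j \<alpha> \<in> vecs (Suc r) (Suc n)" using psi_vecs[OF m0 av(1) jr(2)] .
      moreover have "Uset r (Suc n) (psi ?m0 j \<alpha>) \<subseteq> {1..K}"
        using Uset_psi[OF m0 av(2) av(1), of j] jr(1) sub av(2) by auto
      moreover have "psi ?m0 j \<alpha> ?m0 = j" by (simp add: psi_def)
      ultimately show "\<gamma> \<in> {\<alpha>\<in>Omega r (Suc n) (2 ^ K - 1). \<alpha> ?m0 = j}" using a(2) OmegaK by auto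
    qed
  next
    show "{\<alpha>\<in>Omega r (Suc n) (2 ^ K - 1). \<alpha> ?m0 = j} \<subseteq> psi ?m0 j ` Omega r n (2 ^ K - 1)"
    proof
      fix \<gamma> assume "\<gamma> \<in> {\<alpha>\<in>Omega r (Suc n) (2 ^ K - 1). \<alpha> ?m0 = j}"
      then have g: "\<gamma> \<in> vecs (Suc r) (Suc n)" "Uset r (Suc n) \<gamma> \<subseteq> {1..K}" "\<gamma> ?m0 = j"
        using OmegaK by auto
      let ?a = "unpsi ?m0 \<gamma>"
      have e: "psi ?m0 j ?a = \<gamma>" using psi_unpsi[of \<gamma> ?m0 j] g(3) by simp
      have av: "?a \<in> vecs (Suc r) n" using unpsi_vecs[OF m0 g(1)] .
      have "Uset r n ?a \<subseteq> {1..<?m0}"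
      proof (rule Uset_unpsi_sub[of r ?m0 ?a n j])
        show "Uset r (Suc n) (psi ?m0 j ?a) \<subseteq> {1..?m0}" using g(2) e by auto
      qed (use r m0 av in auto)
      then have "?a \<in> Omega r n (2 ^ K - 1)" using av OmegaK sub by auto
      then show "\<gamma> \<in> psi ?m0 j ` Omega r n (2 ^ K - 1)" using e by (metis image_eqI)
    qed
  qed
  have bij: "bij_betw (psi ?m0 j) (Omega r n (2 ^ K - 1)) {\<alpha>\<in>Omega r (Suc n) (2 ^ K - 1). \<alpha> ?m0 = j}"
    unfolding bij_betw_def using img psi_inj[OF m0(1)] inj_on_subset by blast
  have par: "\<forall>x\<in>C. \<forall>\<alpha>\<in>Omega r n (2 ^ K - 1) - Omega r n 0.
               x (psi ?m0 j \<alpha>) = (\<Sum>\<beta>\<in>Lset r n \<alpha>. x (psi ?m0 j \<beta>))"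
  proof (intro ballI)
    fix x \<alpha> assume x: "x \<in> C" and a: "\<alpha> \<in> Omega r n (2 ^ K - 1) - Omega r n 0"
    then have av: "\<alpha> \<in> vecs (Suc r) n" "Uset r n \<alpha> \<subseteq> {1..<?m0}" "Uset r n \<alpha> \<noteq> {}"
      using OmegaK sub Omega0_iff by auto
    have U: "Uset r (Suc n) (psi ?m0 j \<alpha>) = Uset r n \<alpha>"
      using Uset_psi[OF m0 av(2) av(1), of j] jr(1) by auto
    have pv: "psi ?m0 j \<alpha> \<in> vecs (Suc r) (Suc n)" using psi_vecs[OF m0 av(1) jr(2)] .
    have "wt (Uset r n \<alpha>) < 2 ^ K" using av(2) sub wt_le_sub by metis
    then have "psi ?m0 j \<alpha> \<in> Omega r (Suc n) t" using pv U tK by (simp add: Omega_char)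
    moreover have "psi ?m0 j \<alpha> \<notin> Omega r (Suc n) 0" using U av(3) Omega0_iff by auto
    ultimately have "x (psi ?m0 j \<alpha>) = (\<Sum>\<beta>\<in>Lset r (Suc n) (psi ?m0 j \<alpha>). x \<beta>)"
      using parity[OF C H _ x] by blast
    also have "\<dots> = (\<Sum>\<beta>\<in>psi ?m0 j ` Lset r n \<alpha>. x \<beta>)" using Lset_psi_lt[OF m0 j] by simp
    also have "\<dots> = (\<Sum>\<beta>\<in>Lset r n \<alpha>. x (psi ?m0 j \<beta>))"
      using sum.reindex[OF inj_on_subset[OF psi_inj[OF m0(1)]], of _ x] by (simp add: comp_def)
    finally show "x (psi ?m0 j \<alpha>) = (\<Sum>\<beta>\<in>Lset r n \<alpha>. x (psi ?m0 j \<beta>))" .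
  qed
  show ?thesis using bij par by blast
qed

lemma part2:
  assumes r: "2 \<le> r" and K: "Suc K \<le> Suc n" and tK: "2 ^ K \<le> t" and tu: "t < 2 * 2 ^ K"
    and C: "binary_linear_code (Omega r (Suc n) t) C"
    and H: "\<forall>\<alpha>\<in>Omega r (Suc n) t - Omega r (Suc n) 0. Hrow r (Suc n) t \<alpha> \<in> dual_code (Omega r (Suc n) t) C"
  shows "bij_betw (psi (Suc K) r) (Omega r n (t - 2 ^ K)) (Omega r (Suc n) t - Omega r (Suc n) (2 ^ K - 1)) \<and>
         (\<forall>x\<in>C. \<forall>\<alpha>\<in>Omega r n (t - 2 ^ K) - Omega r n 0.
               x (psi (Suc K) r \<alpha>) = (\<Sum>\<beta>\<in>Lset r n \<alpha>. x (psi (Suc K) r \<beta>)))"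
proof -
  let ?m0 = "Suc K"
  have m0: "1 \<le> ?m0" "?m0 \<le> Suc n" using K by auto
  have rr: "r < Suc r" by simp
  have sub: "{1..K} = {1..<?m0}" by auto
  have KK: "(2::nat) ^ (?m0 - 1) = 2 ^ K" by simp
  have t2: "t - 2 ^ K < 2 ^ K" using tu tK by linarith
  have fwd: "psi ?m0 r \<alpha> \<in> vecs (Suc r) (Suc n) \<and> Uset r n \<alpha> \<subseteq> {1..<?m0} \<and>
      Uset r (Suc n) (psi ?m0 r \<alpha>) = insert ?m0 (Uset r n \<alpha>) \<and>
      wt (Uset r (Suc n) (psi ?m0 r \<alpha>)) = wt (Uset r n \<alpha>) + 2 ^ K"
    if av: "\<alpha> \<in> vecs (Suc r) n" "wt (Uset r n \<alpha>) < 2 ^ K" for \<alpha>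
  proof -
    have s: "Uset r n \<alpha> \<subseteq> {1..<?m0}" using wt_small[OF Uset_sub av(2)] sub by simp
    have U: "Uset r (Suc n) (psi ?m0 r \<alpha>) = insert ?m0 (Uset r n \<alpha>)"
      using Uset_psi[OF m0 s av(1), of r] by simp
    have "?m0 \<notin> Uset r n \<alpha>" using s by auto
    then have "wt (insert ?m0 (Uset r n \<alpha>)) = wt (Uset r n \<alpha>) + 2 ^ K"
      using wt_insert[OF Uset_finite] by simp
    then show ?thesis using U s psi_vecs[OF m0 av(1) rr] by simp
  qed
  have img: "psi ?m0 r ` Omega r n (t - 2 ^ K) = Omega r (Suc n) t - Omega r (Suc n) (2 ^ K - 1)"
  proof
    show "psi ?m0 r ` Omega r n (t - 2 ^ K) \<subseteq> Omega r (Suc n) t - Omega r (Suc n) (2 ^ K - 1)"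
    proof
      fix \<gamma> assume "\<gamma> \<in> psi ?m0 r ` Omega r n (t - 2 ^ K)"
      then obtain \<alpha> where a: "\<alpha> \<in> Omega r n (t - 2 ^ K)" "\<gamma> = psi ?m0 r \<alpha>" by blast
      then have av: "\<alpha> \<in> vecs (Suc r) n" "wt (Uset r n \<alpha>) \<le> t - 2 ^ K" by (auto simp: Omega_char)
      have "wt (Uset r n \<alpha>) < 2 ^ K" using av(2) t2 by linarith
      note f = fwd[OF av(1) this]
      have p: "(0::nat) < 2 ^ K" by simp
      have "wt (Uset r n \<alpha>) + 2 ^ K \<le> t" "\<not> wt (Uset r n \<alpha>) + 2 ^ K \<le> 2 ^ K - 1"
        using av(2) tK p by linarith+
      then show "\<gamma> \<in> Omega r (Suc n) t - Omega r (Suc n) (2 ^ K - 1)"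
        using f a(2) by (auto simp: Omega_char)
    qed
  next
    show "Omega r (Suc n) t - Omega r (Suc n) (2 ^ K - 1) \<subseteq> psi ?m0 r ` Omega r n (t - 2 ^ K)"
    proof
      fix \<gamma> assume "\<gamma> \<in> Omega r (Suc n) t - Omega r (Suc n) (2 ^ K - 1)"
      then have g: "\<gamma> \<in> vecs (Suc r) (Suc n)" "wt (Uset r (Suc n) \<gamma>) \<le> t"
        "\<not> wt (Uset r (Suc n) \<gamma>) \<le> 2 ^ K - 1" by (auto simp: Omega_char)
      have "wt (Uset r (Suc n) \<gamma>) < 2 ^ ?m0" using g(2) tu by simp
      then have gs: "Uset r (Suc n) \<gamma> \<subseteq> {1..?m0}" using wt_small[OF Uset_sub] by blast
      have "?m0 \<in> Uset r (Suc n) \<gamma>"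
      proof (rule ccontr)
        assume "?m0 \<notin> Uset r (Suc n) \<gamma>"
        then have "Uset r (Suc n) \<gamma> \<subseteq> {1..K}" using gs by (auto simp: le_Suc_eq)
        then have "wt (Uset r (Suc n) \<gamma>) < 2 ^ K" by (rule wt_le_sub)
        then show False using g(3) by simp
      qed
      then have gm: "\<gamma> ?m0 = r" by (simp add: Uset_def)
      let ?a = "unpsi ?m0 \<gamma>"
      have e: "psi ?m0 r ?a = \<gamma>" using psi_unpsi[of \<gamma> ?m0 r] gm by simp
      have av: "?a \<in> vecs (Suc r) n" using unpsi_vecs[OF m0 g(1)] .
      have as: "Uset r n ?a \<subseteq> {1..<?m0}"
      proof (rule Uset_unpsi_sub[of r ?m0 ?a n r])
        show "Uset r (Suc n) (psi ?m0 r ?a) \<subseteq> {1..?m0}" using gs e by auto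
      qed (use r m0 av in auto)
      have "wt (Uset r n ?a) < 2 ^ K" using as sub wt_le_sub by metis
      note f = fwd[OF av this]
      have "wt (Uset r (Suc n) \<gamma>) = wt (Uset r n ?a) + 2 ^ K" using f unfolding e by blast
      then have "wt (Uset r n ?a) \<le> t - 2 ^ K" using g(2) by linarith
      then have "?a \<in> Omega r n (t - 2 ^ K)" using av by (simp add: Omega_char)
      then show "\<gamma> \<in> psi ?m0 r ` Omega r n (t - 2 ^ K)" using e by (metis image_eqI)
    qed
  qed
  have bij: "bij_betw (psi ?m0 r) (Omega r n (t - 2 ^ K)) (Omega r (Suc n) t - Omega r (Suc n) (2 ^ K - 1))"
    unfolding bij_betw_def using img psi_inj[OF m0(1)] inj_on_subset by blast
  have parr: "x (psi ?m0 r \<alpha>) = (\<Sum>j<r. \<Sum>\<beta>\<in>Lset r n \<alpha>. x (psi ?m0 j \<beta>))"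
    if x: "x \<in> C" and av: "\<alpha> \<in> vecs (Suc r) n" "wt (Uset r n \<alpha>) \<le> t - 2 ^ K" for x \<alpha>
  proof -
    have "wt (Uset r n \<alpha>) < 2 ^ K" using av(2) t2 by linarith
    note f = fwd[OF av(1) this]
    have "psi ?m0 r \<alpha> \<in> Omega r (Suc n) t - Omega r (Suc n) 0"
      using f av(2) tK by (auto simp: Omega_char wt_zero[OF Uset_finite])
    then have "x (psi ?m0 r \<alpha>) = (\<Sum>\<beta>\<in>Lset r (Suc n) (psi ?m0 r \<alpha>). x \<beta>)"
      using parity[OF C H _ x] by blast
    also have "\<dots> = (\<Sum>\<gamma>\<in>(\<lambda>(j,\<beta>). psi ?m0 j \<beta>) ` ({..<r} \<times> Lset r n \<alpha>). x \<gamma>)"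
      using Lset_psi_r[OF m0] by simp
    also have "\<dots> = (\<Sum>j<r. \<Sum>\<beta>\<in>Lset r n \<alpha>. x (psi ?m0 j \<beta>))"
      using pair_sum[OF m0(1) finite_subset[OF Lset_vecs vecs_finite]] by blast
    finally show ?thesis .
  qed
  have par: "\<forall>x\<in>C. \<forall>\<alpha>\<in>Omega r n (t - 2 ^ K) - Omega r n 0.
               x (psi ?m0 r \<alpha>) = (\<Sum>\<beta>\<in>Lset r n \<alpha>. x (psi ?m0 r \<beta>))"
  proof (intro ballI)
    fix x \<alpha> assume x: "x \<in> C" and a: "\<alpha> \<in> Omega r n (t - 2 ^ K) - Omega r n 0"
    then have av: "\<alpha> \<in> vecs (Suc r) n" "wt (Uset r n \<alpha>) \<le> t - 2 ^ K" by (auto simp: Omega_char)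
    have "x (psi ?m0 r \<alpha>) = (\<Sum>j<r. \<Sum>\<beta>\<in>Lset r n \<alpha>. x (psi ?m0 j \<beta>))" using parr[OF x av] .
    also have "\<dots> = (\<Sum>\<beta>\<in>Lset r n \<alpha>. \<Sum>j<r. x (psi ?m0 j \<beta>))" by (rule sum.swap)
    also have "\<dots> = (\<Sum>\<beta>\<in>Lset r n \<alpha>. x (psi ?m0 r \<beta>))"
    proof (rule sum.cong[OF refl])
      fix \<beta> assume "\<beta> \<in> Lset r n \<alpha>"
      then have bv: "\<beta> \<in> vecs r n" using Lset_vecs by blast
      have b1: "\<beta> \<in> vecs (Suc r) n" using bv vecs_mono by blast
      have b2: "wt (Uset r n \<beta>) \<le> t - 2 ^ K" using vecs_Uset[OF bv] by (simp add: wt_def)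
      have "x (psi ?m0 r \<beta>) = (\<Sum>j<r. \<Sum>\<beta>'\<in>Lset r n \<beta>. x (psi ?m0 j \<beta>'))" using parr[OF x b1 b2] .
      also have "\<dots> = (\<Sum>j<r. x (psi ?m0 j \<beta>))"
        by (rule sum.cong[OF refl]) (simp add: Lset_self[OF bv])
      finally show "(\<Sum>j<r. x (psi ?m0 j \<beta>)) = x (psi ?m0 r \<beta>)" by simp
    qed
    finally show "x (psi ?m0 r \<alpha>) = (\<Sum>\<beta>\<in>Lset r n \<alpha>. x (psi ?m0 r \<beta>))" .
  qed
  show ?thesis using bij par by blast
qed


theorem lemma7:
  fixes r m t m0 :: nat and C :: "((nat \<Rightarrow> nat) \<Rightarrow> bit) set"
  assumes "r \<ge> 2" and "m > 1" and "1 \<le> t" and "t \<le> 2 ^ m - 1"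
    and "binary_linear_code (Omega r m t) C"
    and "\<forall>\<alpha>\<in>Omega r m t - Omega r m 0. Hrow r m t \<alpha> \<in> dual_code (Omega r m t) C"
    and "1 \<le> m0" and "m0 \<le> m"
    and "2 ^ (m0 - 1) - 1 < t" and "t \<le> 2 ^ m0 - 1"
  shows "(\<forall>j<r.
            bij_betw (psi m0 j) (Omega r (m - 1) (2 ^ (m0 - 1) - 1))
              {\<alpha>\<in>Omega r m (2 ^ (m0 - 1) - 1). \<alpha> m0 = j} \<and>
            (\<forall>x\<in>C. \<forall>\<alpha>\<in>Omega r (m - 1) (2 ^ (m0 - 1) - 1) - Omega r (m - 1) 0.
               x (psi m0 j \<alpha>) = (\<Sum>\<beta>\<in>Lset r (m - 1) \<alpha>. x (psi m0 j \<beta>))))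
       \<and> (t - (2 ^ (m0 - 1) - 1) - 1 \<ge> 1 \<longrightarrow>
            bij_betw (psi m0 r) (Omega r (m - 1) (t - (2 ^ (m0 - 1) - 1) - 1))
              (Omega r m t - Omega r m (2 ^ (m0 - 1) - 1)) \<and>
            (\<forall>x\<in>C. \<forall>\<alpha>\<in>Omega r (m - 1) (t - (2 ^ (m0 - 1) - 1) - 1) - Omega r (m - 1) 0.
               x (psi m0 r \<alpha>) = (\<Sum>\<beta>\<in>Lset r (m - 1) \<alpha>. x (psi m0 r \<beta>))))"
  proof -
  define n where "n = m - 1"
  have n: "m = Suc n" using assms(2) n_def by simp
  define K where "K = m0 - 1"
  have K: "m0 = Suc K" using assms(7) K_def by simp
  have mn: "m - 1 = n" using n by simp
  have mK: "m0 - 1 = K" using K by simp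
  have Kn: "Suc K \<le> Suc n" using assms(8) n K by simp
  have p: "(0::nat) < 2 ^ K" by simp
  have "2 ^ K - 1 < t" using assms(9) mK by simp
  then have tK: "2 ^ K \<le> t" using p by linarith
  have "(2::nat) ^ m0 = 2 * 2 ^ K" using K by simp
  then have tu: "t < 2 * 2 ^ K" using assms(10) p by linarith
  have t2: "t - (2 ^ K - 1) - 1 = t - 2 ^ K" using tK p by linarith
  have C: "binary_linear_code (Omega r (Suc n) t) C" using assms(5) n by simp
  have H: "\<forall>\<alpha>\<in>Omega r (Suc n) t - Omega r (Suc n) 0. Hrow r (Suc n) t \<alpha> \<in> dual_code (Omega r (Suc n) t) C"
    using assms(6) n by simp
  note P1 = part1[OF assms(1) Kn tK C H]
  note P2 = part2[OF assms(1) Kn tK tu C H]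
  show ?thesis unfolding mn mK t2 unfolding n K
    apply (rule conjI)
    using P1 apply blast
    using P2 apply blast
    done
qed

end
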